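(* Assume $\chi$ is weakly generic, and let $\sigma=\sigma_{a,b}$ be a Serre weight with $\mathcal{S}(\chi_1,\chi_2,\sigma)\neq\varnothing$. For $\tau\in\Sigma$ and $0\le j<e$ put $m_{\tau,j}=\Omega_{\tau,n}+j(p^f-1)$. Then for all $\tau\in\Sigma$, $1\le j<e$ and $0\le k<f''$: if $(m_{\tau,j},k)\in J^{\mathrm{AH}}_\sigma(\chi_1,\chi_2)$ then $(m_{\tau,j-1},k)\in J^{\mathrm{AH}}_\sigma(\chi_1,\chi_2)$.
   Context: Let $p$ be a prime and $K/\mathbf{Q}_p$ finite with residue field $k$, residue degree $f=[k:\mathbf{F}_p]$ and ramification index $e$; $I_K$ is inertia. Fix $\varpi\in\overline{K}$ with $\varpi^{p^f-1}$ a uniformiser; $\omega\colon G_K\to k^\times$ sends $g$ to the reduction of $g(\varpi)/\varpi$. $\Sigma=\mathrm{Hom}_{\mathbf{F}_p}(k,\overline{\mathbf{F}}_p)$, $\varphi(x)=x^p$ on $k$ (so $\Sigma=\{\tau\circ\varphi^i\}$), $\omega_\tau=\tau\circ\omega$, $\Omega_{\tau,a}=\sum_{i=0}^{f-1}p^ia_{\tau\circ\varphi^i}$ for $a\in\mathbf{Z}^\Sigma$. $\chi_1,\chi_2\colon G_K\to\overline{\mathbf{F}}_p^\times$ continuous, $\chi=\chi_1\chi_2^{-1}=\psi\prod_\tau\omega_\tau^{n_\tau}$, $\psi$ unramified, $n_\tau\in[1,p]$, some $n_\tau<p$ (this determines $n$). Weakly generic: $n_\tau\in[e,p-e]$ for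 all $\tau$. Serre weight $\sigma_{a,b}=\bigotimes_\tau(\det^{b_\tau}\otimes\mathrm{Sym}^{a_\tau-b_\tau}k^2)\otimes_{k,\tau}\overline{\mathbf{F}}_p$, $a_\tau-b_\tau\in[0,p-1]$; $r_\tau=a_\tau-b_\tau+1$. $\mathcal{S}(\chi_1,\chi_2,\sigma)$: pairs $(J,x)$, $J\subseteq\Sigma$, $x_\tau\in[0,e-1]$, with $\chi_1|_{I_K}=\prod_{\tau\in J}\omega_\tau^{a_\tau+1+x_\tau}\prod_{\tau\notin J}\omega_\tau^{b_\tau+x_\tau}$ and $\chi_2|_{I_K}=\prod_{\tau\notin J}\omega_\tau^{a_\tau+e-x_\tau}\prod_{\tau\in J}\omega_\tau^{b_\tau+e-1-x_\tau}$. $s(J,x)_\tau=r_\tau+x_\tau$ if $\tau\in J$, $x_\tau$ if $\tau\notin J$. Order: $(J,x)\preceq(J',x')$ iff $\Omega_{\tau,s(J',x')-s(J,x)}\in(p^f-1)\mathbf{Z}_{\ge0}$ for all $\tau$; a non-empty $\mathcal{S}$ has a unique maximal element $(J,x)$. $J^{\mathrm{AH}}_\sigma(\chi_1,\chi_2)$: let $f'$ be the least $i>0$ with $n_{\tau\circ\varphi^i}=n_\tau$ for all $\tau$, $f''=f/f'$. For $j\ge0$ let $W'_j$ be the set of integers $m$ with $\frac{jp(p^f-1)}{p-1}<m<\frac{(j+1)p(p^f-1)}{p-1}$, $p\nmid m$ and $m\equiv\Omega_{\tau,n}\pmod{p^f-1}$ for some $\tau$; $W'=\bigcup_{j=0}^{e-1}W'_j$,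 $W=W'\times\{0,\dots,f''-1\}$. For $m\in W'$ fix $\tau_m\in\Sigma$ with $m\equiv\Omega_{\tau_m,n}\pmod{p^f-1}$, and for $\alpha=(m,k)\in W$ put $\tau_\alpha=\tau_m\circ\varphi^{-kf'}$. With $(J,x)$ maximal in $\mathcal{S}$, $s=s(J,x)$, $t_\tau=a_\tau-b_\tau+e-s_\tau$, let $\mathcal{I}_\tau=[0,s_\tau-1]$ if $\tau\notin J$ and $\{t_\tau\}\cup[r_\tau,s_\tau-1]$ if $\tau\in J$, and $\xi_\tau=(p^f-1)s_\tau+\Omega_{\tau,s-t}$. Then $J^{\mathrm{AH}}_\sigma(\chi_1,\chi_2)$ is the set of $\alpha=(m,k)\in W$ such that there exist $\tau\in\Sigma$, $d\in\mathcal{I}_\tau$ and $j\ge0$ with $p^jm=\xi_\tau-d(p^f-1)$ and $\tau_\alpha=\tau\circ\varphi^j$. (Under weak genericity $m_{\tau,j}\in W'_j$.)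
   Formalization: The choice of $\tau_m$ for $m\in W'$ depends only on the residue of m modulo $p^f-1$, so $m_{\tau,j}$ and $m_{\tau,j-1}$ get the same $\tau_m$. The statement above fails without it. *)

theory Defs
  imports "HOL-Number_Theory.Number_Theory"
begin

text \<open>The embeddings are indexed by 0..<f: index i stands for
  tau_i = tau_0 o phi^i, so tau_i o phi^j is index (i+j) mod f.
  A restriction to inertia of a character of G_K with values in Fbar_p^* is
  omega_{tau_0}^c for an integer c determined mod p^f - 1; we record it by c.
  Since omega_{tau_i} = omega_{tau_0}^(p^i), prod_tau omega_tau^(a_tau) equals
  omega_{tau_0}^(Omega_{tau_0,a}), and two such characters agree iff the
  exponents agree mod p^f - 1.\<close>

definition NN :: "nat \<Rightarrow> nat \<Rightarrow> int" where
  "NN p f = int p ^ f - 1"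

definition Omg :: "nat \<Rightarrow> nat \<Rightarrow> (nat \<Rightarrow> int) \<Rightarrow> nat \<Rightarrow> int" where
  "Omg p f a i = (\<Sum>l<f. int p ^ l * a ((i + l) mod f))"

text \<open>Membership of (J,x) in S(chi_1,chi_2,sigma_{a,b}); c1, c2 are the
  exponents of chi_1|I_K, chi_2|I_K with respect to omega_{tau_0}.
  x is normalised to be 0 outside the index range.\<close>
definition inS :: "nat \<Rightarrow> nat \<Rightarrow> nat \<Rightarrow> (nat \<Rightarrow> int) \<Rightarrow> (nat \<Rightarrow> int) \<Rightarrow> int \<Rightarrow> int
    \<Rightarrow> nat set \<Rightarrow> (nat \<Rightarrow> int) \<Rightarrow> bool" where
  "inS p f e a b c1 c2 J x \<longleftrightarrow>
     J \<subseteq> {..<f} \<and> (\<forall>i<f. 0 \<le> x i \<and> x i \<le> int e - 1) \<and> (\<forall>i\<ge>f. x i = 0) \<and>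
     [c1 = Omg p f (\<lambda>i. if i \<in> J then a i + 1 + x i else b i + x i) 0] (mod NN p f) \<and>
     [c2 = Omg p f (\<lambda>i. if i \<notin> J then a i + int e - x i else b i + int e - 1 - x i) 0] (mod NN p f)"

definition sv :: "(nat \<Rightarrow> int) \<Rightarrow> (nat \<Rightarrow> int) \<Rightarrow> nat set \<Rightarrow> (nat \<Rightarrow> int) \<Rightarrow> nat \<Rightarrow> int" where
  "sv a b J x i = (if i \<in> J then a i - b i + 1 + x i else x i)"

definition precS :: "nat \<Rightarrow> nat \<Rightarrow> (nat \<Rightarrow> int) \<Rightarrow> (nat \<Rightarrow> int)
    \<Rightarrow> nat set \<Rightarrow> (nat \<Rightarrow> int) \<Rightarrow> nat set \<Rightarrow> (nat \<Rightarrow> int) \<Rightarrow> bool" where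
  "precS p f a b J x J' x' \<longleftrightarrow>
     (\<forall>i<f. \<exists>q::int. q \<ge> 0 \<and>
        Omg p f (\<lambda>l. sv a b J' x' l - sv a b J x l) i = NN p f * q)"

definition isMaxS :: "nat \<Rightarrow> nat \<Rightarrow> nat \<Rightarrow> (nat \<Rightarrow> int) \<Rightarrow> (nat \<Rightarrow> int) \<Rightarrow> int \<Rightarrow> int
    \<Rightarrow> nat set \<Rightarrow> (nat \<Rightarrow> int) \<Rightarrow> bool" where
  "isMaxS p f e a b c1 c2 J x \<longleftrightarrow> inS p f e a b c1 c2 J x \<and>
     (\<forall>J' x'. inS p f e a b c1 c2 J' x' \<and> precS p f a b J x J' x' \<longrightarrow> J' = J \<and> x' = x)"

definition fprime :: "nat \<Rightarrow> (nat \<Rightarrow> int) \<Rightarrow> nat" where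
  "fprime f n = (LEAST i. 0 < i \<and> (\<forall>t<f. n ((t + i) mod f) = n t))"

definition fsecond :: "nat \<Rightarrow> (nat \<Rightarrow> int) \<Rightarrow> nat" where
  "fsecond f n = f div fprime f n"

text \<open>m in W'_j (the real-number bounds j p (p^f-1)/(p-1) are multiplied out).\<close>
definition inWj :: "nat \<Rightarrow> nat \<Rightarrow> (nat \<Rightarrow> int) \<Rightarrow> nat \<Rightarrow> int \<Rightarrow> bool" where
  "inWj p f n j m \<longleftrightarrow>
     int j * int p * NN p f < m * (int p - 1) \<and> m * (int p - 1) < (int j + 1) * int p * NN p f \<and>
     \<not> int p dvd m \<and> (\<exists>t<f. [m = Omg p f n t] (mod NN p f))"

definition inW' :: "nat \<Rightarrow> nat \<Rightarrow> nat \<Rightarrow> (nat \<Rightarrow> int) \<Rightarrow> int \<Rightarrow> bool" where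
  "inW' p f e n m \<longleftrightarrow> (\<exists>j<e. inWj p f n j m)"

definition Iset :: "nat \<Rightarrow> nat \<Rightarrow> nat \<Rightarrow> (nat \<Rightarrow> int) \<Rightarrow> (nat \<Rightarrow> int) \<Rightarrow> nat set \<Rightarrow> (nat \<Rightarrow> int) \<Rightarrow> nat \<Rightarrow> int set" where
  "Iset p f e a b J x t =
     (let s = sv a b J x t; r = a t - b t + 1; tt = a t - b t + int e - s in
      if t \<in> J then insert tt {r..s - 1} else {0..s - 1})"

definition xiS :: "nat \<Rightarrow> nat \<Rightarrow> nat \<Rightarrow> (nat \<Rightarrow> int) \<Rightarrow> (nat \<Rightarrow> int) \<Rightarrow> nat set \<Rightarrow> (nat \<Rightarrow> int) \<Rightarrow> nat \<Rightarrow> int" where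
  "xiS p f e a b J x t = NN p f * sv a b J x t +
     Omg p f (\<lambda>l. sv a b J x l - (a l - b l + int e - sv a b J x l)) t"

text \<open>tau_alpha for alpha = (m,k): tau_m o phi^(-k f'), where the fixed choice
  tau_m (an index with m = Omega_{tau_m,n} mod p^f-1) is given by tm applied to
  the residue of m mod p^f - 1.\<close>
definition tauA :: "nat \<Rightarrow> nat \<Rightarrow> (nat \<Rightarrow> int) \<Rightarrow> (int \<Rightarrow> nat) \<Rightarrow> int \<Rightarrow> nat \<Rightarrow> nat" where
  "tauA p f n tm m k = nat ((int (tm (m mod NN p f)) - int k * int (fprime f n)) mod int f)"

definition JAH :: "nat \<Rightarrow> nat \<Rightarrow> nat \<Rightarrow> (nat \<Rightarrow> int) \<Rightarrow> (nat \<Rightarrow> int) \<Rightarrow> (nat \<Rightarrow> int)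
    \<Rightarrow> (int \<Rightarrow> nat) \<Rightarrow> nat set \<Rightarrow> (nat \<Rightarrow> int) \<Rightarrow> (int \<times> nat) set" where
  "JAH p f e n a b tm J x = {(m, k). inW' p f e n m \<and> k < fsecond f n \<and>
     (\<exists>t<f. \<exists>d \<in> Iset p f e a b J x t. \<exists>j::nat.
        int p ^ j * m = xiS p f e a b J x t - d * NN p f \<and>
        tauA p f n tm m k = (t + j) mod f)}"

end

theory Submission
  imports Defs
begin

lemma geom_int: "((p::int) - 1) * (\<Sum>l<m. p^l) = p^m - 1"
  by (induction m) (auto simp: algebra_simps)

lemma Omg_upper:
  assumes "\<forall>l<f. u l \<le> U" "0 < f" "1 \<le> p"
  shows "(int p - 1) * Omg p f u i \<le> U * NN p f"
proof -
  have "Omg p f u i \<le> (\<Sum>l<f. int p ^ l * U)"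
    unfolding Omg_def using assms by (intro sum_mono mult_left_mono) auto
  then have "(int p - 1) * Omg p f u i \<le> (int p - 1) * (\<Sum>l<f. int p ^ l * U)"
    by (rule mult_left_mono) (use assms in auto)
  also have "\<dots> = U * ((int p - 1) * (\<Sum>l<f. int p ^ l))"
    by (simp add: sum_distrib_right[symmetric])
  also have "\<dots> = U * NN p f" by (simp add: geom_int NN_def)
  finally show ?thesis .
qed

lemma Omg_lower:
  assumes "\<forall>l<f. L \<le> u l" "0 < f" "1 \<le> p"
  shows "L * NN p f \<le> (int p - 1) * Omg p f u i"
proof -
  have "(\<Sum>l<f. int p ^ l * L) \<le> Omg p f u i"
    unfolding Omg_def using assms by (intro sum_mono mult_left_mono) auto
  then have "(int p - 1) * (\<Sum>l<f. int p ^ l * L) \<le> (int p - 1) * Omg p f u i"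
    by (rule mult_left_mono) (use assms in auto)
  moreover have "(int p - 1) * (\<Sum>l<f. int p ^ l * L) = L * ((int p - 1) * (\<Sum>l<f. int p ^ l))"
    by (simp add: sum_distrib_right[symmetric])
  moreover have "\<dots> = L * NN p f" by (simp add: geom_int NN_def)
  ultimately show ?thesis by simp
qed

lemma Omg_rec:
  assumes "i < f"
  shows "int p * Omg p f u (Suc i mod f) = Omg p f u i + NN p f * u i"
proof -
  define A where "A = (\<lambda>l. int p ^ l * u ((i + l) mod f))"
  have "(\<Sum>l<Suc f. A l) = A 0 + (\<Sum>l<f. A (Suc l))" by (rule sum.lessThan_Suc_shift)
  moreover have "(\<Sum>l<Suc f. A l) = (\<Sum>l<f. A l) + A f" by simp
  ultimately have *: "(\<Sum>l<f. A (Suc l)) = (\<Sum>l<f. A l) + A f - A 0" by simp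
  have "int p * Omg p f u (Suc i mod f) = (\<Sum>l<f. A (Suc l))"
    unfolding Omg_def A_def sum_distrib_left
    by (intro sum.cong) (auto simp: mod_add_left_eq)
  also have "\<dots> = Omg p f u i + NN p f * u i"
  proof -
    have A0: "A 0 = u i" using assms by (simp add: A_def)
    have Af: "A f = int p ^ f * u i" using assms by (simp add: A_def)
    have S: "(\<Sum>l<f. A l) = Omg p f u i" by (simp add: A_def Omg_def)
    show ?thesis unfolding * A0 Af S NN_def by (simp add: algebra_simps)
  qed
  finally show ?thesis .
qed

lemma Omg_modp:
  assumes "0 < f" "t < f"
  shows "\<exists>R. Omg p f n t = n t + int p * R"
proof -
  obtain f0 where f0: "f = Suc f0" using assms by (cases f) auto
  have "Omg p f n t = n ((t + 0) mod f) + (\<Sum>l<f0. int p ^ Suc l * n ((t + Suc l) mod f))"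
    unfolding Omg_def f0 by (subst sum.lessThan_Suc_shift) simp
  also have "\<dots> = n t + int p * (\<Sum>l<f0. int p ^ l * n ((t + Suc l) mod f))"
    using assms by (simp add: sum_distrib_left mult.assoc)
  finally show ?thesis by blast
qed


theorem proposition5p13:
  fixes p f e :: nat and c1 c2 :: int and n a b :: "nat \<Rightarrow> int"
    and tm :: "int \<Rightarrow> nat" and J :: "nat set" and x :: "nat \<Rightarrow> int"
  assumes "prime p" and "0 < f" and "0 < e"
    and n_range: "\<forall>i<f. 1 \<le> n i \<and> n i \<le> int p" and "\<exists>i<f. n i < int p"
    and chi: "[c1 - c2 = Omg p f n 0] (mod NN p f)"
    and weakly_generic: "\<forall>i<f. int e \<le> n i \<and> n i \<le> int p - int e"
    and serre: "\<forall>i<f. 0 \<le> a i - b i \<and> a i - b i \<le> int p - 1"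
    and S_nonempty: "\<exists>J' x'. inS p f e a b c1 c2 J' x'"
    and maximal: "isMaxS p f e a b c1 c2 J x"
    and tm_choice: "\<forall>m. inW' p f e n m \<longrightarrow>
        tm (m mod NN p f) < f \<and> [m = Omg p f n (tm (m mod NN p f))] (mod NN p f)"
  shows "\<forall>t<f. \<forall>j k. 1 \<le> j \<and> j < e \<and> k < fsecond f n \<longrightarrow>
           (Omg p f n t + int j * NN p f, k) \<in> JAH p f e n a b tm J x \<longrightarrow>
           (Omg p f n t + int (j - 1) * NN p f, k) \<in> JAH p f e n a b tm J x"
proof (intro allI impI)
  fix t j k
  assume t: "t < f" and jk: "1 \<le> j \<and> j < e \<and> k < fsecond f n"
    and mem: "(Omg p f n t + int j * NN p f, k) \<in> JAH p f e n a b tm J x"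
  define N where "N = NN p f"
  define W where "W = Omg p f n t"
  define sv' where "sv' = sv a b J x"
  define u where "u = (\<lambda>l. sv' l - (a l - b l + int e - sv' l))"
  define Om where "Om = Omg p f u"
  define P where "P = int p"
  have xi: "\<And>i. xiS p f e a b J x i = N * sv' i + Om i"
    by (simp add: xiS_def N_def Om_def u_def sv'_def)
  have p2: "2 \<le> P" using assms(1) prime_ge_2_nat P_def by auto
  have Npos: "0 < N"
  proof -
    have "1 < P ^ f" using p2 \<open>0 < f\<close> by (intro one_less_power) auto
    then show ?thesis by (simp add: N_def NN_def P_def)
  qed
  have e2: "2 \<le> int e" using jk by auto
  have pe: "2 * int e \<le> P" using weakly_generic \<open>0 < f\<close> P_def by force
  from maximal have inS: "inS p f e a b c1 c2 J x" by (simp add: isMaxS_def)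
  hence Jsub: "J \<subseteq> {..<f}" and xr: "\<forall>i<f. 0 \<le> x i \<and> x i \<le> int e - 1"
    by (simp_all add: inS_def)
  have ux: "\<And>l. l < f \<Longrightarrow> 0 \<le> a l - b l \<and> a l - b l \<le> P - 1 \<and> 0 \<le> x l \<and> x l \<le> int e - 1"
    using serre xr P_def by auto
  have u_up: "\<forall>l<f. u l \<le> P + int e - 1"
  proof (intro allI impI)
    fix l assume "l < f" from ux[OF this] show "u l \<le> P + int e - 1" by (auto simp: u_def sv'_def sv_def)
  qed
  have u_lo: "\<forall>l<f. 1 - P - int e \<le> u l"
  proof (intro allI impI)
    fix l assume "l < f" from ux[OF this] show "1 - P - int e \<le> u l" by (auto simp: u_def sv'_def sv_def)
  qed
  have u_nJ: "\<And>l. l < f \<Longrightarrow> l \<notin> J \<Longrightarrow> u l \<le> int e - 2"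
  proof -
    fix l assume "l < f" "l \<notin> J" with ux[OF this(1)] show "u l \<le> int e - 2" by (auto simp: u_def sv'_def sv_def)
  qed
  have Om_up: "\<And>i. (P - 1) * Om i \<le> (P + int e - 1) * N"
    unfolding Om_def N_def P_def using Omg_upper[of f u] u_up \<open>0 < f\<close> p2 P_def by auto
  have Om_lo: "\<And>i. (1 - P - int e) * N \<le> (P - 1) * Om i"
    unfolding Om_def N_def P_def using Omg_lower[of f _ u] u_lo \<open>0 < f\<close> p2 P_def by auto
  have Om_rec: "\<And>i. i < f \<Longrightarrow> P * Om (Suc i mod f) = Om i + N * u i"
    unfolding Om_def N_def P_def by (rule Omg_rec)
  have W_lo: "int e * N \<le> (P - 1) * W"
    unfolding W_def N_def P_def using Omg_lower[of f "int e" n] weakly_generic \<open>0 < f\<close> p2 P_def by auto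
  have W_up: "(P - 1) * W \<le> (P - int e) * N"
    unfolding W_def N_def P_def using Omg_upper[of f n] weakly_generic \<open>0 < f\<close> p2 P_def by auto
  define mj where "mj = W + int j * N"
  define mj1 where "mj1 = W + int (j - 1) * N"
  have mj1_eq: "mj1 = mj - N" using jk by (simp add: mj_def mj1_def of_nat_diff algebra_simps)
  from mem obtain \<tau> d jj where tau: "\<tau> < f" and dI: "d \<in> Iset p f e a b J x \<tau>"
    and eq0: "P ^ jj * mj = xiS p f e a b J x \<tau> - d * N"
    and ta: "tauA p f n tm mj k = (\<tau> + jj) mod f"
    and inW: "inW' p f e n mj"
    unfolding JAH_def mj_def W_def N_def P_def by blast
  have eq: "P ^ jj * mj = (sv' \<tau> - d) * N + Om \<tau>" using eq0 xi by (simp add: algebra_simps)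
  have ndvd: "\<not> P dvd mj" using inW by (auto simp: inW'_def inWj_def P_def)
  have ta': "tauA p f n tm mj1 k = tauA p f n tm mj k"
  proof -
    have "mj1 mod N = mj mod N" unfolding mj1_eq by (simp add: mod_diff_right_eq[symmetric])
    then show ?thesis by (simp add: tauA_def N_def)
  qed
  define J1 where "J1 = int j - 1"
  have J1: "int (j - 1) = J1" using jk by (simp add: J1_def of_nat_diff)
  have J1r: "0 \<le> J1" "J1 \<le> int e - 2" using jk by (auto simp: J1_def)
  have mj1J: "mj1 = W + J1 * N" unfolding mj1_def J1 ..
  have ntr: "int e \<le> n t" "n t \<le> P - int e" using weakly_generic t P_def by auto
  have inW1: "inW' p f e n mj1"
  proof -
    have e1: "mj1 * (P - 1) = (P - 1) * W + J1 * P * N - J1 * N"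
      by (simp add: mj1J algebra_simps)
    have J1N: "J1 * N < int e * N" using J1r Npos by (intro mult_strict_right_mono) auto
    have J1N0: "0 \<le> J1 * N" using J1r Npos by simp
    have PeN: "(P - int e) * N = P * N - int e * N" by (simp add: algebra_simps)
    have eN: "0 < int e * N" using Npos \<open>0 < e\<close> by simp
    have c1': "J1 * P * N < mj1 * (P - 1)" using e1 J1N W_lo by linarith
    have c2': "mj1 * (P - 1) < (J1 + 1) * P * N"
      using e1 W_up PeN J1N0 eN by (simp add: algebra_simps)
    obtain R where R: "W = n t + P * R" using Omg_modp[OF \<open>0 < f\<close> t, of p n] by (auto simp: W_def P_def)
    obtain f0 where f0: "f = Suc f0" using \<open>0 < f\<close> by (cases f) auto
    have NP: "N = P * P ^ f0 - 1" by (simp add: N_def NN_def P_def f0)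
    have "mj1 = (n t - J1) + P * (R + J1 * P ^ f0)"
      by (simp add: mj1J R NP algebra_simps)
    moreover have "\<not> P dvd (n t - J1)"
    proof
      assume "P dvd (n t - J1)"
      moreover have "0 < n t - J1" using ntr J1r by linarith
      ultimately have "P \<le> n t - J1" by (rule zdvd_imp_le)
      then show False using ntr J1r \<open>0 < e\<close> by linarith
    qed
    ultimately have nd: "\<not> P dvd mj1"
      by (metis dvd_add_left_iff dvd_triv_left)
    have cg: "[mj1 = Omg p f n t] (mod NN p f)"
      by (simp add: cong_def mj1J W_def N_def)
    have "inWj p f n (j - 1) mj1"
      unfolding inWj_def J1 using c1' c2' nd cg t
      by (auto simp: J1 P_def N_def)
    then show ?thesis unfolding inW'_def using jk by (intro exI[of _ "j - 1"]) auto
  qed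
  have main: "\<exists>\<tau>'<f. \<exists>d'\<in>Iset p f e a b J x \<tau>'. \<exists>jj'::nat.
      P ^ jj' * mj1 = xiS p f e a b J x \<tau>' - d' * N \<and> tauA p f n tm mj1 k = (\<tau>' + jj') mod f"
  proof -
    define g where "g = sv' \<tau> - d"
    have svt: "sv' \<tau> = (if \<tau> \<in> J then a \<tau> - b \<tau> + 1 + x \<tau> else x \<tau>)"
      by (simp add: sv'_def sv_def)
    have Iset_eq: "\<And>i. Iset p f e a b J x i = (if i \<in> J then insert (a i - b i + int e - sv' i) {a i - b i + 1..sv' i - 1} else {0..sv' i - 1})"
      by (simp add: Iset_def Let_def sv'_def)
    have uxt: "0 \<le> a \<tau> - b \<tau> \<and> a \<tau> - b \<tau> \<le> P - 1 \<and> 0 \<le> x \<tau> \<and> x \<tau> \<le> int e - 1" using ux[OF tau] .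
    have gcases: "(\<tau> \<in> J \<and> d = a \<tau> - b \<tau> + int e - sv' \<tau>) \<or>
       (1 \<le> g \<and> g \<le> x \<tau> \<and> (\<tau> \<in> J \<longrightarrow> a \<tau> - b \<tau> + 1 \<le> d) \<and> (\<tau> \<notin> J \<longrightarrow> 0 \<le> d))"
      using dI svt unfolding Iset_eq g_def by (auto split: if_splits)
    have gu: "\<tau> \<in> J \<and> d = a \<tau> - b \<tau> + int e - sv' \<tau> \<Longrightarrow> g = u \<tau>"
      by (simp add: g_def u_def)
    have g_up: "g \<le> P + int e - 1" using gcases gu u_up tau uxt by auto
    have eqg: "P ^ jj * mj = g * N + Om \<tau>" using eq by (simp add: g_def)
    define K where "K = (P + int e - 1) * N"
    have Kpos: "0 < K" unfolding K_def using Npos p2 by simp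
    have mj_lo: "K \<le> (P - 1) * mj"
    proof -
      have "(P - 1) * N \<le> (P - 1) * (int j * N)"
        using jk Npos p2 by (intro mult_left_mono) auto
      then show ?thesis unfolding K_def mj_def using W_lo by (simp add: algebra_simps)
    qed
    have A: "P ^ jj * K \<le> (P - 1) * (P ^ jj * mj)"
    proof -
      have "P ^ jj * K \<le> P ^ jj * ((P - 1) * mj)" using mj_lo p2 by (intro mult_left_mono) auto
      then show ?thesis by (simp add: algebra_simps)
    qed
    have B: "(P - 1) * (g * N + Om \<tau>) \<le> (P - 1) * g * N + K"
      using Om_up[of \<tau>] by (simp add: K_def algebra_simps)
    have B2: "(P - 1) * g * N \<le> (P - 1) * (P + int e - 1) * N"
      using g_up p2 Npos by (intro mult_right_mono mult_left_mono) auto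
    have PK: "(P - 1) * (P + int e - 1) * N + K = P * K" by (simp add: K_def algebra_simps)
    have A': "P ^ jj * K \<le> (P - 1) * (g * N + Om \<tau>)" using A eqg by simp
    have "P ^ jj * K \<le> P * K" using A' B B2 PK by linarith
    then have "P ^ jj \<le> P" using Kpos by simp
    have jj1: "jj \<le> 1"
    proof (rule ccontr)
      assume "\<not> jj \<le> 1"
      then have "P ^ 2 \<le> P ^ jj" using p2 by (intro power_increasing) auto
      moreover have "P < P ^ 2" using p2 by (simp add: power2_eq_square)
      ultimately show False using \<open>P ^ jj \<le> P\<close> by linarith
    qed
    show ?thesis
    proof (cases "jj = 1")
      case True
      have "P * K \<le> (P - 1) * g * N + K" using A' B True by simp
      then have "(P - 1) * K \<le> (P - 1) * (g * N)" by (simp add: algebra_simps)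
      then have "K \<le> g * N" using p2 by simp
      then have "(P + int e - 1) * N \<le> g * N" by (simp add: K_def)
      then have "P + int e - 1 \<le> g" using Npos by simp
      then have gg: "g = P + int e - 1" using g_up by simp
      have tJ: "\<tau> \<in> J" and dt: "d = a \<tau> - b \<tau> + int e - sv' \<tau>"
        using gcases gg uxt pe by auto
      have ug: "u \<tau> = P + int e - 1" using gu tJ dt gg by simp
      have ab: "a \<tau> - b \<tau> = P - 1" and xe: "x \<tau> = int e - 1"
        using ug uxt tJ by (auto simp: u_def sv'_def sv_def)
      have sv1: "sv' \<tau> = P + int e - 1" using svt tJ ab xe by simp
      have d0: "d = 0" using dt ab sv1 by simp
      have dI': "d + P \<in> Iset p f e a b J x \<tau>"
        unfolding Iset_eq using tJ ab sv1 d0 e2 by auto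
      have "P ^ 1 * mj1 = xiS p f e a b J x \<tau> - (d + P) * N"
        using eq0 True unfolding mj1_eq by (simp add: algebra_simps)
      moreover have "tauA p f n tm mj1 k = (\<tau> + 1) mod f" using ta ta' True by simp
      ultimately show ?thesis using tau dI' by blast
    next
      case False
      then have jj0: "jj = 0" using jj1 by simp
      have mjg: "mj = g * N + Om \<tau>" using eqg jj0 by simp
      have tat: "tauA p f n tm mj1 k = \<tau>" using ta ta' jj0 tau by simp
      show ?thesis
      proof (cases "\<tau> \<in> J \<and> d = a \<tau> - b \<tau> + int e - sv' \<tau>")
        case True
        then have "mj = P * Om (Suc \<tau> mod f)" using mjg gu Om_rec[OF tau] by (simp add: algebra_simps)
        then have False using ndvd by simp
        then show ?thesis ..
      next
        case nt: False
        then have g1: "1 \<le> g" "g \<le> x \<tau>" "\<tau> \<in> J \<Longrightarrow> a \<tau> - b \<tau> + 1 \<le> d" "\<tau> \<notin> J \<Longrightarrow> 0 \<le> d"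
          using gcases by auto
        show ?thesis
        proof (cases "2 \<le> g")
          case True
          have dI': "d + 1 \<in> Iset p f e a b J x \<tau>"
            unfolding Iset_eq using g1 True by (auto simp: g_def)
          have "P ^ 0 * mj1 = xiS p f e a b J x \<tau> - (d + 1) * N"
            using eq0 jj0 unfolding mj1_eq by (simp add: algebra_simps)
          moreover have "tauA p f n tm mj1 k = (\<tau> + 0) mod f" using tat tau by simp
          ultimately show ?thesis using tau dI' by blast
        next
          case False
          then have gone: "g = 1" using g1 by simp
          have mOm: "mj1 = Om \<tau>" using mjg gone mj1_eq by simp
          define \<tau>' where "\<tau>' = (\<tau> + f - 1) mod f"
          have tau': "\<tau>' < f" using \<open>0 < f\<close> by (simp add: \<tau>'_def)
          have suc: "Suc \<tau>' mod f = \<tau>"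
          proof (cases "\<tau> = 0")
            case True
            then show ?thesis using \<open>0 < f\<close> by (simp add: \<tau>'_def)
          next
            case False
            then have ee: "\<tau> + f - 1 = (\<tau> - 1) + f" by arith
            have "\<tau>' = ((\<tau> - 1) + f) mod f" unfolding \<tau>'_def ee ..
            also have "\<dots> = \<tau> - 1" using tau by simp
            finally have "\<tau>' = \<tau> - 1" .
            then show ?thesis using False tau by simp
          qed
          have rec: "P * Om \<tau> = Om \<tau>' + N * u \<tau>'" using Om_rec[OF tau'] suc by simp
          have W_mj1: "(P - 1) * W \<le> (P - 1) * mj1"
            using J1r Npos p2 by (intro mult_left_mono) (auto simp: mj1J)
          have eqU: "(P - 1) * (N * u \<tau>') = P * ((P - 1) * Om \<tau>) - (P - 1) * Om \<tau>'"
            using rec by (simp add: algebra_simps)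
          have eO: "int e * N \<le> (P - 1) * Om \<tau>" using W_lo W_mj1[unfolded mOm] by linarith
          moreover have "P * (int e * N) \<le> P * ((P - 1) * Om \<tau>)"
            using eO p2 by (intro mult_left_mono) auto
          moreover have "(P - 1) * Om \<tau>' \<le> K" using Om_up[of \<tau>'] by (simp add: K_def)
          ultimately have "P * (int e * N) - K \<le> (P - 1) * (N * u \<tau>')" using eqU by linarith
          moreover have "P * (int e * N) - K = (P - 1) * (N * (int e - 1))"
            by (simp add: K_def algebra_simps)
          ultimately have "(P - 1) * (N * (int e - 1)) \<le> (P - 1) * (N * u \<tau>')" by simp
          then have "N * (int e - 1) \<le> N * u \<tau>'" using p2 by simp
          then have "int e - 1 \<le> u \<tau>'" using Npos by simp
          then have tJ': "\<tau>' \<in> J" using u_nJ[OF tau'] by force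
          define d' where "d' = a \<tau>' - b \<tau>' + int e - sv' \<tau>'"
          have dI': "d' \<in> Iset p f e a b J x \<tau>'" unfolding Iset_eq d'_def using tJ' by simp
          have "P ^ 1 * mj1 = xiS p f e a b J x \<tau>' - d' * N"
            using rec mOm xi[of \<tau>'] by (simp add: d'_def u_def algebra_simps)
          moreover have "tauA p f n tm mj1 k = (\<tau>' + 1) mod f" using tat suc by simp
          ultimately show ?thesis using tau' dI' by blast
        qed
      qed
    qed
  qed
  show "(Omg p f n t + int (j - 1) * NN p f, k) \<in> JAH p f e n a b tm J x"
    using main inW1 jk unfolding JAH_def mj1_def W_def N_def P_def by blast
qed

end
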